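(* Let $\{a_k\}_{k\ge1}$ be a sequence of positive numbers and, for each $N\ge2$, let $T_N$ be the number of i.i.d. draws needed to observe all $N$ types when type $k\in\{1,\dots,N\}$ has probability $a_k/\sum_{i=1}^N a_i$. Then the sequence $\{T_N\}_{N\ge2}$ is stochastically increasing: $P(T_{N+1}\ge k)\ge P(T_N\ge k)$ for all integers $k$ and all $N\ge2$. *)

theory Defs
  imports "HOL-Probability.Probability"
begin

definition draw_pmf :: "(nat \<Rightarrow> real) \<Rightarrow> nat \<Rightarrow> nat pmf" where
  "draw_pmf a N = embed_pmf (\<lambda>j. if j \<in> {1..N} then a j / (\<Sum>i=1..N. a i) else 0)"

text \<open>P(T_N \<ge> k): T_N \<ge> k holds iff the first k-1 i.i.d. draws do not yet contain all N types
  (for k \<le> 1 this is the empty prefix, giving probability 1).\<close>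
definition coupon_tail :: "(nat \<Rightarrow> real) \<Rightarrow> nat \<Rightarrow> int \<Rightarrow> real" where
  "coupon_tail a N k =
     measure_pmf.prob (replicate_pmf (nat (k - 1)) (draw_pmf a N)) {xs. \<not> {1..N} \<subseteq> set xs}"

end

theory Submission
  imports Defs
begin

lemma pmf_draw:
  assumes pos: "\<And>i. i \<ge> 1 \<Longrightarrow> a i > 0" and N: "N \<ge> 1"
  shows "pmf (draw_pmf a N) j = (if j \<in> {1..N} then a j / (\<Sum>i=1..N. a i) else 0)"
proof -
  have S: "(\<Sum>i=1..N. a i) > 0" using N pos by (intro sum_pos) auto
  show ?thesis unfolding draw_pmf_def
  proof (rule pmf_embed_pmf)
    show "\<And>x. 0 \<le> (if x \<in> {1..N} then a x / (\<Sum>i=1..N. a i) else 0)"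
      using S pos by (auto intro!: divide_nonneg_pos less_imp_le)
    have "(\<integral>\<^sup>+x. ennreal (if x \<in> {1..N} then a x / (\<Sum>i=1..N. a i) else 0) \<partial>count_space UNIV)
        = (\<Sum>x\<in>{1..N}. ennreal (if x \<in> {1..N} then a x / (\<Sum>i=1..N. a i) else 0))"
      by (rule nn_integral_count_space') auto
    also have "\<dots> = ennreal (\<Sum>x\<in>{1..N}. a x / (\<Sum>i=1..N. a i))"
      using S pos by (subst sum_ennreal[symmetric]) (auto intro!: divide_nonneg_pos less_imp_le)
    also have "(\<Sum>x\<in>{1..N}. a x / (\<Sum>i=1..N. a i)) = 1"
      using S by (simp add: sum_divide_distrib[symmetric])
    finally show "(\<integral>\<^sup>+x. ennreal (if x \<in> {1..N} then a x / (\<Sum>i=1..N. a i) else 0) \<partial>count_space UNIV) = 1"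
      by simp
  qed
qed

lemma map_replicate_pmf:
  "map_pmf (map f) (replicate_pmf n p) = replicate_pmf n (map_pmf f p)"
proof (induction n)
  case (Suc n)
  show ?case
    by (simp add: map_bind_pmf bind_map_pmf map_return_pmf Suc.IH[symmetric])
qed simp

lemma set_draw:
  assumes pos: "\<And>i. i \<ge> 1 \<Longrightarrow> a i > 0" and N: "N \<ge> 1"
  shows "set_pmf (draw_pmf a N) \<subseteq> {1..N}"
  using pmf_draw[OF assms] by (auto simp: set_pmf_eq)

lemma aux: "(S::real) > 0 \<Longrightarrow> b > 0 \<Longrightarrow> c / (S + b) + c / S * (b / (S + b)) = c / S"
  by (simp add: divide_simps) (simp add: algebra_simps)

lemma marginal:
  assumes pos: "\<And>i. i \<ge> 1 \<Longrightarrow> a i > 0" and N: "N \<ge> 1"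
  shows "map_pmf (\<lambda>(x,y). if x \<le> N then x else y) (pair_pmf (draw_pmf a (N+1)) (draw_pmf a N))
       = draw_pmf a N" (is "?L = ?q")
proof (rule pmf_eqI)
  fix j
  define p where "p = draw_pmf a (N+1)"
  define S where "S = (\<Sum>i=1..N. a i)"
  have S: "S > 0" unfolding S_def using N pos by (intro sum_pos) auto
  have S': "(\<Sum>i=1..N+1. a i) = S + a (N+1)" unfolding S_def by simp
  have "?L = bind_pmf p (\<lambda>x. if x \<le> N then return_pmf x else ?q)"
    unfolding p_def pair_pmf_def map_bind_pmf
    by (intro bind_pmf_cong refl) (auto simp: map_bind_pmf map_return_pmf bind_return_pmf' map_pmf_def[symmetric])
  hence "pmf ?L j = (\<integral>x. pmf (if x \<le> N then return_pmf x else ?q) j \<partial>measure_pmf p)"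
    by (simp add: pmf_bind)
  also have "\<dots> = (\<Sum>x\<in>{1..N+1}. pmf (if x \<le> N then return_pmf x else ?q) j * pmf p x)"
  proof (rule integral_measure_pmf_real)
    have "set_pmf p \<subseteq> {1..N+1}" unfolding p_def by (rule set_draw) (use pos in auto)
    thus "\<And>x. x \<in> set_pmf p \<Longrightarrow> pmf (if x \<le> N then return_pmf x else ?q) j \<noteq> 0 \<Longrightarrow> x \<in> {1..N+1}" by blast
  qed simp
  also have "\<dots> = (\<Sum>x\<in>{1..N}. pmf (return_pmf x) j * pmf p x) + pmf ?q j * pmf p (N+1)"
  proof -
    have "{1..N+1} = insert (N+1) {1..N}" by auto
    thus ?thesis by simp
  qed
  also have "(\<Sum>x\<in>{1..N}. pmf (return_pmf x) j * pmf p x) = (if j \<in> {1..N} then pmf p j else 0)"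
    by (simp add: pmf_return indicator_def sum.delta[of "{1..N}" j "\<lambda>x. pmf p x", simplified eq_commute] if_distrib cong: if_cong)
  finally have L: "pmf ?L j = (if j \<in> {1..N} then pmf p j else 0) + pmf ?q j * pmf p (N+1)" .
  have b: "a (N+1) > 0" using pos by simp
  have pp: "pmf p x = (if x \<in> {1..N+1} then a x / (S + a (N+1)) else 0)" for x
  proof -
    have N1': "N + 1 \<ge> 1" by simp
    show ?thesis using pmf_draw[of a "N+1" x, OF pos N1'] S' unfolding p_def by simp
  qed
  have pq: "pmf ?q x = (if x \<in> {1..N} then a x / S else 0)" for x
    using pmf_draw[of a N x, OF pos N] unfolding S_def by simp
  show "pmf ?L j = pmf ?q j"
  proof (cases "j \<in> {1..N}")
    case True
    have "a j / (S + a (N+1)) + a j / S * (a (N+1) / (S + a (N+1))) = a j / S"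
      by (rule aux[OF S b])
    thus ?thesis using True unfolding L pp pq by simp
  next
    case False
    have "pmf ?q j = 0" using False pq[of j] by auto
    thus ?thesis using False L by auto
  qed
qed

theorem mainTheorem6:
  fixes a :: "nat \<Rightarrow> real" and N :: nat and k :: int
  assumes "\<And>i. i \<ge> 1 \<Longrightarrow> a i > 0"
    and "N \<ge> 2"
  shows "coupon_tail a (N + 1) k \<ge> coupon_tail a N k"
proof -
  define m where "m = nat (k - 1)"
  define p where "p = draw_pmf a (N+1)"
  define q where "q = draw_pmf a N"
  define g where "g = (\<lambda>(x::nat,y::nat). (x, if x \<le> N then x else y))"
  define R where "R = replicate_pmf m (map_pmf g (pair_pmf p q))"
  have N1: "N \<ge> 1" using assms by simp
  have fstg: "map_pmf fst (map_pmf g (pair_pmf p q)) = p"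
    by (simp add: pmf.map_comp g_def case_prod_unfold o_def map_fst_pair_pmf)
  have sndg: "map_pmf snd (map_pmf g (pair_pmf p q)) = q"
    using marginal[OF assms(1) N1] unfolding p_def q_def
    by (simp add: pmf.map_comp g_def case_prod_unfold o_def)
  have Rp: "map_pmf (map fst) R = replicate_pmf m p"
    unfolding R_def map_replicate_pmf fstg ..
  have Rq: "map_pmf (map snd) R = replicate_pmf m q"
    unfolding R_def map_replicate_pmf sndg ..
  have "coupon_tail a N k = measure_pmf.prob R {zs. \<not> {1..N} \<subseteq> set (map snd zs)}"
    unfolding coupon_tail_def m_def[symmetric] q_def[symmetric] Rq[symmetric] by simp
  also have "\<dots> \<le> measure_pmf.prob R {zs. \<not> {1..N+1} \<subseteq> set (map fst zs)}"
  proof (rule measure_pmf.finite_measure_mono_AE)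
    show "AE zs in measure_pmf R. zs \<in> {zs. \<not> {1..N} \<subseteq> set (map snd zs)} \<longrightarrow> zs \<in> {zs. \<not> {1..N+1} \<subseteq> set (map fst zs)}"
    proof (rule AE_pmfI)
      fix zs assume "zs \<in> set_pmf R"
      hence zs: "\<And>z. z \<in> set zs \<Longrightarrow> z \<in> g ` UNIV"
        unfolding R_def set_replicate_pmf by auto
      show "zs \<in> {zs. \<not> {1..N} \<subseteq> set (map snd zs)} \<longrightarrow> zs \<in> {zs. \<not> {1..N+1} \<subseteq> set (map fst zs)}"
      proof
        assume "zs \<in> {zs. \<not> {1..N} \<subseteq> set (map snd zs)}"
        hence A: "\<not> {1..N} \<subseteq> snd ` set zs" by simp
        show "zs \<in> {zs. \<not> {1..N+1} \<subseteq> set (map fst zs)}"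
        proof (rule CollectI, rule notI)
        assume "{1..N+1} \<subseteq> set (map fst zs)"
        hence B: "{1..N+1} \<subseteq> fst ` set zs" by simp
        from A obtain j where j: "j \<in> {1..N}" "j \<notin> snd ` set zs" by blast
        from j B obtain z where z: "z \<in> set zs" "fst z = j" by force
        from zs[OF z(1)] obtain x y where "z = g (x,y)" by auto
        with z j have "snd z = j" by (auto simp: g_def)
        with z j show False by force
      qed
      qed
    qed
  qed simp
  also have "\<dots> = coupon_tail a (N+1) k"
    unfolding coupon_tail_def m_def[symmetric] p_def[symmetric] Rp[symmetric] by simp
  finally show ?thesis .
qed

end
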